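(* There is an absolute constant $C$ such that for all integers $n \ge 3$, $g(n,3) \le C\, n\, (\log_2 n)^{\log_2 7}$.
   Context: For integers $2\le k\le n$, let $S_n$ denote the set of permutations of $[n]=\{1,\dots,n\}$ (written as sequences), and $S_{n,k}$ the set of all sequences of $k$ distinct elements of $[n]$. A sequence $\kappa\in S_{n,k}$ is a subsequence of a permutation $\pi\in S_n$ if its elements appear in $\pi$ in the same relative order as in $\kappa$. A perfect sequence covering array ${\rm PSCA}(n,k)$ with multiplicity $\lambda$ (a positive integer) is a multiset $X$ of elements of $S_n$ such that every $\kappa\in S_{n,k}$ is a subsequence of exactly $\lambda$ elements of $X$ (counted with multiplicity). $g(n,k)$ denotes the smallest $\lambda$ for which a ${\rm PSCA}(n,k)$ with multiplicity $\lambda$ exists. *)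

theory Defs
  imports "HOL-Analysis.Analysis" "HOL-Library.Multiset" "HOL-Library.Sublist"
begin

definition perms_n :: "nat \<Rightarrow> nat list set" where
  "perms_n n = {xs. distinct xs \<and> set xs = {1..n}}"

definition seqs_nk :: "nat \<Rightarrow> nat \<Rightarrow> nat list set" where
  "seqs_nk n k = {xs. distinct xs \<and> length xs = k \<and> set xs \<subseteq> {1..n}}"

definition is_PSCA :: "nat \<Rightarrow> nat \<Rightarrow> nat \<Rightarrow> nat list multiset \<Rightarrow> bool" where
  "is_PSCA n k lam X \<longleftrightarrow>
     set_mset X \<subseteq> perms_n n \<and>
     (\<forall>\<kappa> \<in> seqs_nk n k. size (filter_mset (\<lambda>\<pi>. subseq \<kappa> \<pi>) X) = lam)"

definition g :: "nat \<Rightarrow> nat \<Rightarrow> nat" where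
  "g n k = (LEAST lam. lam > 0 \<and> (\<exists>X. is_PSCA n k lam X))"

end

theory Submission
  imports Defs "HOL-Algebra.Algebraic_Closure_Type" "HOL-Library.Z2"
begin


lemma subseq_Cons_conv:
  "subseq (x # xs) ys \<longleftrightarrow> (\<exists>u w. ys = u @ x # w \<and> subseq xs w)"
proof (induction ys)
  case Nil then show ?case by simp
next
  case (Cons y ys)
  show ?case
  proof (cases "x = y")
    case True
    show ?thesis
    proof
      assume "subseq (x # xs) (y # ys)"
      then have "subseq xs ys" using True by simp
      then show "\<exists>u w. y # ys = u @ x # w \<and> subseq xs w" using True by (intro exI[of _ "[]"] exI[of _ ys]) auto
    next
      assume "\<exists>u w. y # ys = u @ x # w \<and> subseq xs w"
      then obtain u w where uw: "y # ys = u @ x # w" "subseq xs w" by blast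
      show "subseq (x # xs) (y # ys)"
      proof (cases u)
        case Nil then show ?thesis using uw True by simp
      next
        case (Cons a u')
        then have "ys = (u' @ [x]) @ w" using uw by simp
        then have "subseq xs ys" using uw(2) subseq_drop_many by metis
        then show ?thesis using True by simp
      qed
    qed
  next
    case False
    then show ?thesis using Cons by (auto simp: Cons_eq_append_conv)
  qed
qed

lemma subseq2_conv: "subseq [x,y] L \<longleftrightarrow> (\<exists>u w. L = u @ x # w \<and> y \<in> set w)"
  using subseq_Cons_conv[of x "[y]" L] subseq_singleton_left[of y] by simp

lemma subseq2_I: "L = u @ x # v @ y # w \<Longrightarrow> subseq [x,y] L"
  unfolding subseq2_conv by (intro exI[of _ u] exI[of _ "v @ y # w"]) auto

lemma subseq2_E:
  assumes "subseq [x,y] L"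
  obtains u v w where "L = u @ x # v @ y # w"
proof -
  obtain u w where "L = u @ x # w" "y \<in> set w" using assms unfolding subseq2_conv by blast
  moreover obtain v w' where "w = v @ y # w'" using \<open>y \<in> set w\<close> by (meson split_list)
  ultimately show thesis using that by simp
qed

lemma distinct_split_unique:
  assumes "distinct L" "L = A @ y # B" "L = C @ y # D"
  shows "A = C \<and> B = D"
  by (metis append_Cons_eq_iff assms(1,2,3) distinct.simps(2)
    distinct_append not_distinct_conv_prefix)

lemma prec_asym:
  assumes "distinct L" "subseq [x,y] L"
  shows "\<not> subseq [y,x] L"
proof
  assume "subseq [y,x] L"
  then obtain u' v' w' where L': "L = u' @ y # v' @ x # w'" by (rule subseq2_E)
  obtain u v w where L: "L = u @ x # v @ y # w" using assms(2) by (rule subseq2_E)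
  have "L = (u @ x # v) @ y # w" "L = u' @ y # (v' @ x # w')" using L L' by auto
  then have "u @ x # v = u'" "w = v' @ x # w'" using distinct_split_unique[OF assms(1)] by blast+
  then show False using assms(1) L by auto
qed

lemma prec_total:
  assumes "x \<in> set L" "y \<in> set L" "x \<noteq> y"
  shows "subseq [x,y] L \<or> subseq [y,x] L"
proof -
  obtain u w where L: "L = u @ x # w" using assms(1) by (meson split_list)
  have "y \<in> set u \<or> y \<in> set w" using assms L by auto
  then show ?thesis
  proof
    assume "y \<in> set u"
    then obtain u1 u2 where "u = u1 @ y # u2" by (meson split_list)
    then have "subseq [y,x] L" using L by (intro subseq2_I[where u=u1 and v=u2 and w=w]) simp
    then show ?thesis ..
  next
    assume "y \<in> set w"
    then have "subseq [x,y] L" using L unfolding subseq2_conv by blast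
    then show ?thesis ..
  qed
qed

lemma prec_irrefl: "distinct L \<Longrightarrow> \<not> subseq [x,x] L"
  using prec_asym by metis

lemma subseq3_conv:
  assumes "distinct L"
  shows "subseq [x,y,z] L \<longleftrightarrow> subseq [x,y] L \<and> subseq [y,z] L"
proof
  assume a: "subseq [x,y,z] L"
  have "subseq [x,y] [x,y,z]" "subseq [y,z] [x,y,z]" by simp_all
  then show "subseq [x,y] L \<and> subseq [y,z] L"
    using subseq_order.order_trans[OF _ a] by blast
next
  assume a: "subseq [x,y] L \<and> subseq [y,z] L"
  obtain u v w where L: "L = u @ x # v @ y # w" using a by (meson subseq2_E)
  obtain u' v' w' where L': "L = u' @ y # v' @ z # w'" using a by (meson subseq2_E)
  have "L = (u @ x # v) @ y # w" "L = u' @ y # (v' @ z # w')" using L L' by auto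
  then have "w = v' @ z # w'" using distinct_split_unique[OF assms] by blast
  then have "subseq [y,z] (v @ y # w)" by (intro subseq2_I[where u=v and v=v' and w=w']) simp
  then show "subseq [x,y,z] L" unfolding subseq_Cons_conv[of x] using L by (intro exI[of _ u] exI[of _ "v @ y # w"]) simp
qed

lemma prec_trans:
  assumes "distinct L" "subseq [x,y] L" "subseq [y,z] L"
  shows "subseq [x,z] L"
proof -
  have "subseq [x,y,z] L" using subseq3_conv[OF assms(1)] assms by blast
  moreover have "subseq [x,z] [x,y,z]" by simp
  ultimately show ?thesis using subseq_order.order_trans by metis
qed

lemma subseq_rev2: "subseq [x,y] (rev L) \<longleftrightarrow> subseq [y,x] L"
proof
  assume "subseq [x,y] (rev L)"
  then obtain u v w where "rev L = u @ x # v @ y # w" by (rule subseq2_E)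
  then have "L = rev (u @ x # v @ y # w)" by (metis rev_rev_ident)
  then have "L = rev w @ y # rev v @ x # rev u" by simp
  then show "subseq [y,x] L" by (rule subseq2_I)
next
  assume "subseq [y,x] L"
  then obtain u v w where "L = u @ y # v @ x # w" by (rule subseq2_E)
  then have "rev L = rev w @ x # rev v @ y # rev u" by simp
  then show "subseq [x,y] (rev L)" by (rule subseq2_I)
qed


lemma append_eq_two: "xs1 @ xs2 = [x,y] \<longleftrightarrow>
   (xs1 = [] \<and> xs2 = [x,y]) \<or> (xs1 = [x] \<and> xs2 = [y]) \<or> (xs1 = [x,y] \<and> xs2 = [])"
  by (cases xs1; cases xs2) (auto simp: Cons_eq_append_conv append_eq_Cons_conv)

lemma subseq2_append:
  "subseq [x,y] (u @ v) \<longleftrightarrow> subseq [x,y] u \<or> subseq [x,y] v \<or> (x \<in> set u \<and> y \<in> set v)"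
proof
  assume "subseq [x,y] (u @ v)"
  then obtain xs1 xs2 where h: "[x,y] = xs1 @ xs2" "subseq xs1 u" "subseq xs2 v"
    by (auto simp: subseq_append_iff)
  from h(1)[symmetric] have "(xs1 = [] \<and> xs2 = [x,y]) \<or> (xs1 = [x] \<and> xs2 = [y]) \<or> (xs1 = [x,y] \<and> xs2 = [])"
    by (simp only: append_eq_two)
  then show "subseq [x,y] u \<or> subseq [x,y] v \<or> (x \<in> set u \<and> y \<in> set v)"
    using h(2,3) by (auto simp: subseq_singleton_left)
next
  assume "subseq [x,y] u \<or> subseq [x,y] v \<or> (x \<in> set u \<and> y \<in> set v)"
  then show "subseq [x,y] (u @ v)"
  proof (elim disjE conjE)
    assume "subseq [x,y] u" then show ?thesis by (simp add: subseq_rev_drop_many)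
  next
    assume "subseq [x,y] v" then show ?thesis by (simp add: subseq_drop_many)
  next
    assume "x \<in> set u" "y \<in> set v"
    then show ?thesis unfolding subseq_append_iff
      by (intro exI[of _ "[x]"] exI[of _ "[y]"]) (simp add: subseq_singleton_left)
  qed
qed

lemma subseq_map_inj:
  assumes "inj f"
  shows "subseq (map f xs) (map f ys) \<longleftrightarrow> subseq xs ys"
proof (induction ys arbitrary: xs)
  case Nil then show ?case by (cases xs) simp_all
next
  case (Cons y ys)
  show ?case
  proof (cases xs)
    case Nil then show ?thesis by simp
  next
    case (Cons x xs')
    show ?thesis
    proof (cases "x = y")
      case True then show ?thesis using Cons Cons.IH by simp
    next
      case False
      then have "f x \<noteq> f y" using assms by (simp add: inj_eq)
      then show ?thesis using Cons Cons.IH[of "x # xs'"] False by simp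
    qed
  qed
qed

lemma subseq_set: "subseq xs ys \<Longrightarrow> set xs \<subseteq> set ys"
  by (induct rule: list_emb.induct) auto

definition blk :: "('b \<Rightarrow> 'b \<Rightarrow> 'c) \<Rightarrow> 'b list \<Rightarrow> 'b list \<Rightarrow> 'c list" where
  "blk P \<pi> \<sigma> = concat (map (\<lambda>a. map (P a) \<sigma>) \<pi>)"

lemma blk_Cons: "blk P (c # \<pi>) \<sigma> = map (P c) \<sigma> @ blk P \<pi> \<sigma>"
  by (simp add: blk_def)

lemma blk_Nil: "blk P [] \<sigma> = []"
  by (simp add: blk_def)

locale inj2 =
  fixes P :: "'b \<Rightarrow> 'b \<Rightarrow> 'c"
  assumes inj2: "P a b = P a' b' \<Longrightarrow> a = a' \<and> b = b'"
begin

lemma P_eq_iff: "P a b = P a' b' \<longleftrightarrow> a = a' \<and> b = b'"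
  using inj2 by metis

lemma inj_P: "inj (P a)"
  by (meson inj2 injI)

lemma mem_map_P: "P a b \<in> set (map (P c) \<sigma>) \<longleftrightarrow> a = c \<and> b \<in> set \<sigma>"
  by (auto simp: P_eq_iff)

lemma mem_blk: "P a b \<in> set (blk P \<pi> \<sigma>) \<longleftrightarrow> a \<in> set \<pi> \<and> b \<in> set \<sigma>"
  by (induction \<pi>) (auto simp: blk_Nil blk_Cons P_eq_iff)

lemma set_blk: "set (blk P \<pi> \<sigma>) = (\<lambda>(a,b). P a b) ` (set \<pi> \<times> set \<sigma>)"
  by (induction \<pi>) (auto simp: blk_Nil blk_Cons)

lemma distinct_blk: "distinct \<pi> \<Longrightarrow> distinct \<sigma> \<Longrightarrow> distinct (blk P \<pi> \<sigma>)"
proof (induction \<pi>)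
  case Nil then show ?case by (simp add: blk_Nil)
next
  case (Cons c \<pi>)
  have "inj_on (P c) (set \<sigma>)" using inj_P[of c] by (metis inj_on_subset subset_UNIV)
  then have d1: "distinct (map (P c) \<sigma>)" using Cons.prems(2) by (simp add: distinct_map)
  have d2: "set (map (P c) \<sigma>) \<inter> set (blk P \<pi> \<sigma>) = {}"
  proof (rule ccontr)
    assume "set (map (P c) \<sigma>) \<inter> set (blk P \<pi> \<sigma>) \<noteq> {}"
    then obtain x where "x \<in> set \<sigma>" "P c x \<in> set (blk P \<pi> \<sigma>)" by auto
    then have "c \<in> set \<pi>" by (simp only: mem_blk)
    then show False using Cons.prems(1) by simp
  qed
  have d3: "distinct (blk P \<pi> \<sigma>)" using Cons by simp
  show ?case unfolding blk_Cons distinct_append using d1 d2 d3 by blast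
qed

lemma blk_prec:
  assumes "distinct \<pi>" "a \<in> set \<pi>" "a' \<in> set \<pi>" "b \<in> set \<sigma>" "b' \<in> set \<sigma>"
  shows "subseq [P a b, P a' b'] (blk P \<pi> \<sigma>) \<longleftrightarrow>
          (a \<noteq> a' \<and> subseq [a,a'] \<pi>) \<or> (a = a' \<and> subseq [b,b'] \<sigma>)"
  using assms
proof (induction \<pi>)
  case Nil then show ?case by simp
next
  case (Cons c \<pi>)
  have A: "subseq [P a b, P a' b'] (map (P c) \<sigma>) \<longleftrightarrow> a = c \<and> a' = c \<and> subseq [b,b'] \<sigma>"
  proof
    assume h: "subseq [P a b, P a' b'] (map (P c) \<sigma>)"
    then have "P a b \<in> set (map (P c) \<sigma>)" "P a' b' \<in> set (map (P c) \<sigma>)"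
      using subseq_set[OF h] by auto
    then have "a = c" "a' = c" by (simp_all only: mem_map_P)
    then show "a = c \<and> a' = c \<and> subseq [b,b'] \<sigma>"
      using h subseq_map_inj[OF inj_P, of c "[b,b']" \<sigma>] by simp
  next
    assume "a = c \<and> a' = c \<and> subseq [b,b'] \<sigma>"
    then show "subseq [P a b, P a' b'] (map (P c) \<sigma>)"
      using subseq_map_inj[OF inj_P, of c "[b,b']" \<sigma>] by simp
  qed
  have cnot: "c \<notin> set \<pi>" using Cons.prems by simp
  have B: "subseq [P a b, P a' b'] (blk P \<pi> \<sigma>) \<longleftrightarrow>
     a \<in> set \<pi> \<and> a' \<in> set \<pi> \<and> ((a \<noteq> a' \<and> subseq [a,a'] \<pi>) \<or> (a = a' \<and> subseq [b,b'] \<sigma>))"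
  proof (cases "a \<in> set \<pi> \<and> a' \<in> set \<pi>")
    case True
    have "distinct \<pi>" using Cons.prems(1) by simp
    then show ?thesis using Cons.IH[OF _ _ _ Cons.prems(4,5)] True by simp
  next
    case False
    then have "\<not> subseq [P a b, P a' b'] (blk P \<pi> \<sigma>)"
      using subseq_set[of "[P a b, P a' b']" "blk P \<pi> \<sigma>"] by (auto simp: mem_blk)
    then show ?thesis using False by blast
  qed
  have C: "subseq [a,a'] (c # \<pi>) \<longleftrightarrow> (a = c \<and> a' \<in> set \<pi>) \<or> (a \<noteq> c \<and> subseq [a,a'] \<pi>)"
    by (cases "a = c") (simp_all add: subseq_singleton_left)
  have D: "subseq [a,a'] \<pi> \<Longrightarrow> a \<in> set \<pi> \<and> a' \<in> set \<pi>"
    using subseq_set[of "[a,a']" \<pi>] by auto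
  have E: "P a b \<in> set (map (P c) \<sigma>) \<and> P a' b' \<in> set (blk P \<pi> \<sigma>) \<longleftrightarrow> a = c \<and> a' \<in> set \<pi>"
    using Cons.prems by (simp only: mem_map_P mem_blk) blast
  have F: "a = c \<or> a \<in> set \<pi>" "a' = c \<or> a' \<in> set \<pi>" using Cons.prems(2,3) by auto
  have key: "((a = c \<and> a' = c \<and> subseq [b,b'] \<sigma>) \<or>
     (a \<in> set \<pi> \<and> a' \<in> set \<pi> \<and> ((a \<noteq> a' \<and> subseq [a,a'] \<pi>) \<or> (a = a' \<and> subseq [b,b'] \<sigma>))) \<or>
     (a = c \<and> a' \<in> set \<pi>))
    \<longleftrightarrow> (a \<noteq> a' \<and> ((a = c \<and> a' \<in> set \<pi>) \<or> (a \<noteq> c \<and> subseq [a,a'] \<pi>))) \<or> (a = a' \<and> subseq [b,b'] \<sigma>)"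
    using F cnot D by blast
  show ?case
    unfolding blk_Cons subseq2_append A B C E by (rule key)
qed

end


definition psca_on :: "'a set \<Rightarrow> nat \<Rightarrow> 'a list multiset \<Rightarrow> bool" where
  "psca_on S lam XS \<longleftrightarrow> (\<forall>\<pi>\<in>#XS. distinct \<pi> \<and> set \<pi> = S) \<and>
     (\<forall>a\<in>S. \<forall>b\<in>S. \<forall>c\<in>S. distinct [a,b,c] \<longrightarrow> size (filter_mset (\<lambda>\<pi>. subseq [a,b,c] \<pi>) XS) = lam)"

lemma psca_onD1: "psca_on S lam XS \<Longrightarrow> \<pi> \<in># XS \<Longrightarrow> distinct \<pi> \<and> set \<pi> = S"
  unfolding psca_on_def by blast

lemma psca_onD2: "psca_on S lam XS \<Longrightarrow> a\<in>S \<Longrightarrow> b\<in>S \<Longrightarrow> c\<in>S \<Longrightarrow> distinct [a,b,c] \<Longrightarrow>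
   size (filter_mset (\<lambda>\<pi>. subseq [a,b,c] \<pi>) XS) = lam"
  unfolding psca_on_def by blast

lemma filter_mset_split3:
  assumes "\<And>x. x \<in># M \<Longrightarrow> P x \<longleftrightarrow> (Q1 x \<or> Q2 x \<or> Q3 x)"
    "\<And>x. x \<in># M \<Longrightarrow> \<not>(Q1 x \<and> Q2 x)" "\<And>x. x \<in># M \<Longrightarrow> \<not>(Q1 x \<and> Q3 x)"
    "\<And>x. x \<in># M \<Longrightarrow> \<not>(Q2 x \<and> Q3 x)"
  shows "size (filter_mset P M) = size (filter_mset Q1 M) + size (filter_mset Q2 M) + size (filter_mset Q3 M)"
proof -
  have "filter_mset P M = filter_mset Q1 M + filter_mset Q2 M + filter_mset Q3 M"
  proof (rule multiset_eqI)
    fix x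
    show "count (filter_mset P M) x = count (filter_mset Q1 M + filter_mset Q2 M + filter_mset Q3 M) x"
    proof (cases "x \<in># M")
      case True then show ?thesis using assms[of x] by auto
    next
      case False then show ?thesis by (simp add: not_in_iff)
    qed
  qed
  then show ?thesis by simp
qed

lemma filter_mset_split2:
  "size (filter_mset P M) = size (filter_mset (\<lambda>x. P x \<and> Q x) M) + size (filter_mset (\<lambda>x. P x \<and> \<not> Q x) M)"
proof -
  have "filter_mset P M = filter_mset (\<lambda>x. P x \<and> Q x) M + filter_mset (\<lambda>x. P x \<and> \<not> Q x) M"
    by (rule multiset_eqI) simp
  then show ?thesis by simp
qed

lemma size_filter_cong:
  assumes "\<And>x. x \<in># M \<Longrightarrow> P x \<longleftrightarrow> Q x"
  shows "size (filter_mset P M) = size (filter_mset Q M)"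
  using filter_mset_cong0[of M P Q] assms by simp

lemma psca_pair3:
  assumes XS: "psca_on S lam XS" and "a\<in>S" "b\<in>S" "c\<in>S" "distinct [a,b,c]"
  shows "size (filter_mset (\<lambda>\<pi>. subseq [a,b] \<pi>) XS) = 3*lam"
proof -
  have "size (filter_mset (\<lambda>\<pi>. subseq [a,b] \<pi>) XS) =
     size (filter_mset (\<lambda>\<pi>. subseq [c,a,b] \<pi>) XS) + size (filter_mset (\<lambda>\<pi>. subseq [a,c,b] \<pi>) XS)
     + size (filter_mset (\<lambda>\<pi>. subseq [a,b,c] \<pi>) XS)"
  proof (rule filter_mset_split3)
    fix \<pi> assume "\<pi> \<in># XS"
    then have d: "distinct \<pi>" and s: "set \<pi> = S" using psca_onD1[OF XS] by auto
    have t1: "subseq [c,a] \<pi> \<or> subseq [a,c] \<pi>" using prec_total[of c \<pi> a] s assms by auto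
    have t2: "subseq [c,b] \<pi> \<or> subseq [b,c] \<pi>" using prec_total[of c \<pi> b] s assms by auto
    note tr = prec_trans[OF d] and as = prec_asym[OF d]
    show "subseq [a,b] \<pi> \<longleftrightarrow> (subseq [c,a,b] \<pi> \<or> subseq [a,c,b] \<pi> \<or> subseq [a,b,c] \<pi>)"
      unfolding subseq3_conv[OF d] using t1 t2 tr as by metis
    show "\<not> (subseq [c,a,b] \<pi> \<and> subseq [a,c,b] \<pi>)"
      unfolding subseq3_conv[OF d] using as by blast
    show "\<not> (subseq [c,a,b] \<pi> \<and> subseq [a,b,c] \<pi>)"
      unfolding subseq3_conv[OF d] using as tr by metis
    show "\<not> (subseq [a,c,b] \<pi> \<and> subseq [a,b,c] \<pi>)"
      unfolding subseq3_conv[OF d] using as by blast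
  qed
  also have "\<dots> = 3 * lam"
    using psca_onD2[OF XS] assms by (auto simp: distinct_length_2_or_more)
  finally show ?thesis .
qed

lemma psca_pair:
  assumes XS: "psca_on S lam XS" and "finite S" "card S \<ge> 3" "a\<in>S" "b\<in>S" "a \<noteq> b"
  shows "size (filter_mset (\<lambda>\<pi>. subseq [a,b] \<pi>) XS) = 3*lam"
proof -
  have "card {a,b} < card S" using assms by (simp add: card_insert_if)
  then have "S - {a,b} \<noteq> {}" by (metis Diff_eq_empty_iff assms(2) card_mono finite.emptyI finite_insert leD)
  then obtain c where "c \<in> S" "c \<noteq> a" "c \<noteq> b" by blast
  then show ?thesis using psca_pair3[OF XS] assms by auto
qed

lemma subseq_map_inj_on:
  assumes "inj_on f A"
  shows "set xs \<subseteq> A \<Longrightarrow> set ys \<subseteq> A \<Longrightarrow> subseq (map f xs) (map f ys) \<longleftrightarrow> subseq xs ys"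
proof (induction ys arbitrary: xs)
  case Nil then show ?case by (cases xs) simp_all
next
  case (Cons y ys)
  show ?case
  proof (cases xs)
    case Nil then show ?thesis by simp
  next
    case (Cons x xs')
    show ?thesis
    proof (cases "x = y")
      case True then show ?thesis using Cons Cons.IH Cons.prems by simp
    next
      case False
      then have "f x \<noteq> f y" using assms Cons.prems Cons by (auto simp: inj_on_eq_iff)
      then show ?thesis using Cons Cons.IH[of "x # xs'"] Cons.prems False by simp
    qed
  qed
qed

lemma psca_restrict:
  assumes XS: "psca_on S lam XS" and T: "T \<subseteq> S"
  shows "psca_on T lam (image_mset (filter (\<lambda>x. x \<in> T)) XS)"
  unfolding psca_on_def
proof (intro conjI ballI impI)
  fix \<pi>' assume "\<pi>' \<in># image_mset (filter (\<lambda>x. x \<in> T)) XS"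
  then obtain \<pi> where "\<pi> \<in># XS" "\<pi>' = filter (\<lambda>x. x \<in> T) \<pi>" by auto
  then show "distinct \<pi>'" "set \<pi>' = T" using psca_onD1[OF XS] T by auto
next
  fix a b c assume abc: "a \<in> T" "b \<in> T" "c \<in> T" "distinct [a,b,c]"
  have "size (filter_mset (\<lambda>\<pi>. subseq [a,b,c] \<pi>) (image_mset (filter (\<lambda>x. x \<in> T)) XS))
      = size (filter_mset (\<lambda>\<pi>. subseq [a,b,c] (filter (\<lambda>x. x \<in> T) \<pi>)) XS)"
    by (simp add: filter_mset_image_mset)
  also have "\<dots> = size (filter_mset (\<lambda>\<pi>. subseq [a,b,c] \<pi>) XS)"
  proof (rule size_filter_cong)
    fix \<pi>
    have "filter (\<lambda>x. x \<in> T) [a,b,c] = [a,b,c]" using abc by simp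
    then show "subseq [a,b,c] (filter (\<lambda>x. x \<in> T) \<pi>) \<longleftrightarrow> subseq [a,b,c] \<pi>"
      using subseq_filter[of "[a,b,c]" \<pi> "\<lambda>x. x \<in> T"]
        subseq_order.order_trans[OF _ subseq_filter_left[of "\<lambda>x. x \<in> T" \<pi>]]
      by metis
  qed
  also have "\<dots> = lam" using psca_onD2[OF XS] abc T by auto
  finally show "size (filter_mset (\<lambda>\<pi>. subseq [a,b,c] \<pi>) (image_mset (filter (\<lambda>x. x \<in> T)) XS)) = lam" .
qed

lemma psca_bij:
  assumes XS: "psca_on S lam XS" and f: "bij_betw f S T"
  shows "psca_on T lam (image_mset (map f) XS)"
  unfolding psca_on_def
proof (intro conjI ballI impI)
  fix \<pi>' assume "\<pi>' \<in># image_mset (map f) XS"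
  then obtain \<pi> where p: "\<pi> \<in># XS" "\<pi>' = map f \<pi>" by auto
  then have "distinct \<pi>" "set \<pi> = S" using psca_onD1[OF XS] by auto
  then show "distinct \<pi>'" "set \<pi>' = T" using p f
    by (auto simp: distinct_map bij_betw_def)
next
  fix a b c assume abc: "a \<in> T" "b \<in> T" "c \<in> T" "distinct [a,b,c]"
  define g where "g = inv_into S f"
  have g: "bij_betw g T S" using f unfolding g_def by (rule bij_betw_inv_into)
  have fg: "\<And>x. x \<in> T \<Longrightarrow> f (g x) = x" using f unfolding g_def by (meson bij_betw_inv_into_right)
  have gS: "\<And>x. x \<in> T \<Longrightarrow> g x \<in> S" using g by (meson bij_betwE)
  have inj: "inj_on f S" using f by (simp add: bij_betw_def)
  have k: "[a,b,c] = map f [g a, g b, g c]" using fg abc by simp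
  have "size (filter_mset (\<lambda>\<pi>. subseq [a,b,c] \<pi>) (image_mset (map f) XS))
      = size (filter_mset (\<lambda>\<pi>. subseq [a,b,c] (map f \<pi>)) XS)"
    by (simp add: filter_mset_image_mset)
  also have "\<dots> = size (filter_mset (\<lambda>\<pi>. subseq [g a, g b, g c] \<pi>) XS)"
  proof (rule size_filter_cong)
    fix \<pi> assume "\<pi> \<in># XS"
    then have "set \<pi> \<subseteq> S" using psca_onD1[OF XS] by auto
    then show "subseq [a,b,c] (map f \<pi>) \<longleftrightarrow> subseq [g a, g b, g c] \<pi>"
      unfolding k using subseq_map_inj_on[OF inj, of "[g a, g b, g c]" \<pi>] gS abc by simp
  qed
  also have "\<dots> = lam"
  proof -
    have "distinct [g a, g b, g c]" using abc fg by (metis distinct_map k)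
    then show ?thesis using psca_onD2[OF XS] gS abc by auto
  qed
  finally show "size (filter_mset (\<lambda>\<pi>. subseq [a,b,c] \<pi>) (image_mset (map f) XS)) = lam" .
qed

lemma psca_card:
  assumes XS: "psca_on S lam XS" and "finite S" "finite T" "card T \<le> card S"
  shows "\<exists>Y. psca_on T lam Y"
proof -
  obtain S' where S': "S' \<subseteq> S" "card S' = card T"
    using assms(4) by (meson obtain_subset_with_card_n)
  have fS': "finite S'" using S' assms(2) finite_subset by blast
  obtain f where "bij_betw f S' T" using S' fS' assms(3) by (metis finite_same_card_bij)
  then show ?thesis using psca_bij psca_restrict[OF XS S'(1)] by blast
qed

lemma is_PSCA_of_psca:
  assumes "psca_on {1..n} lam XS"
  shows "is_PSCA n 3 lam XS"
  unfolding is_PSCA_def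
proof (intro conjI ballI)
  show "set_mset XS \<subseteq> perms_n n" using psca_onD1[OF assms] by (auto simp: perms_n_def)
next
  fix \<kappa> assume "\<kappa> \<in> seqs_nk n 3"
  then have k: "distinct \<kappa>" "length \<kappa> = 3" "set \<kappa> \<subseteq> {1..n}" by (auto simp: seqs_nk_def)
  then obtain a b c where "\<kappa> = [a,b,c]" by (auto simp: numeral_3_eq_3 length_Suc_conv)
  then show "size (filter_mset (\<lambda>\<pi>. subseq \<kappa> \<pi>) XS) = lam"
    using psca_onD2[OF assms] k by auto
qed

lemma g_le:
  assumes "psca_on {1..n} lam XS" "lam > 0"
  shows "g n 3 \<le> lam"
  unfolding g_def using is_PSCA_of_psca[OF assms(1)] assms(2) by (intro Least_le) blast


fun ell :: "'a::field option \<Rightarrow> 'a \<times> 'a \<Rightarrow> 'a" where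
  "ell None p = fst p" | "ell (Some s) p = snd p - s * fst p"

fun ell' :: "'a::field option \<Rightarrow> 'a \<times> 'a \<Rightarrow> 'a" where
  "ell' None p = snd p" | "ell' (Some s) p = fst p"

fun ptd :: "'a::field option \<Rightarrow> 'a \<Rightarrow> 'a \<Rightarrow> 'a \<times> 'a" where
  "ptd None a b = (a, b)" | "ptd (Some s) a b = (b, a + s * b)"

lemma ptd_ell: "ptd d (ell d p) (ell' d p) = p"
  by (cases d; cases p) auto

lemma ell_ptd [simp]: "ell d (ptd d a b) = a" "ell' d (ptd d a b) = b"
  by (cases d; simp)+

lemma inj2_ptd: "inj2 (ptd d)"
  by unfold_locales (metis ell_ptd)

definition ordl :: "'a::field option \<Rightarrow> 'a list \<Rightarrow> bool \<Rightarrow> ('a \<times> 'a) list" where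
  "ordl d \<pi> e = blk (ptd d) \<pi> (if e then rev \<pi> else \<pi>)"

definition dirs :: "'a::field set \<Rightarrow> 'a option set" where
  "dirs F = insert None (Some ` F)"

definition dir :: "'a::field \<times> 'a \<Rightarrow> 'a \<times> 'a \<Rightarrow> 'a option" where
  "dir p p' = (if fst p = fst p' then None else Some ((snd p - snd p') / (fst p - fst p')))"

definition fclosed :: "'a::field set \<Rightarrow> bool" where
  "fclosed F \<longleftrightarrow> (\<forall>x\<in>F. \<forall>y\<in>F. x + y \<in> F \<and> x - y \<in> F \<and> x * y \<in> F \<and> x / y \<in> F)"

lemma ell_eq_iff_dir:
  fixes p p' :: "'a::field \<times> 'a"
  assumes "p \<noteq> p'"
  shows "ell d p = ell d p' \<longleftrightarrow> d = dir p p'"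
proof (cases d)
  case None then show ?thesis by (simp add: dir_def)
next
  case (Some s)
  obtain x y x' y' where pp: "p = (x,y)" "p' = (x',y')" by (cases p; cases p')
  show ?thesis
  proof (cases "x = x'")
    case True
    then have "y \<noteq> y'" using assms pp by auto
    then show ?thesis using Some True pp by (simp add: dir_def)
  next
    case False
    then have "x - x' \<noteq> 0" by simp
    then have "(y - s * x = y' - s * x') \<longleftrightarrow> s = (y - y') / (x - x')"
      by (auto simp: field_simps)
    then show ?thesis using Some False pp by (simp add: dir_def)
  qed
qed

lemma dir_in_dirs:
  assumes "fclosed F" "p \<in> F \<times> F" "p' \<in> F \<times> F"
  shows "dir p p' \<in> dirs F"
  using assms unfolding dir_def dirs_def fclosed_def by (auto simp: mem_Times_iff)

lemma ell_in: "fclosed F \<Longrightarrow> d \<in> dirs F \<Longrightarrow> p \<in> F \<times> F \<Longrightarrow> ell d p \<in> F"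
  unfolding fclosed_def dirs_def by (cases p) auto

lemma ell'_in: "fclosed F \<Longrightarrow> d \<in> dirs F \<Longrightarrow> p \<in> F \<times> F \<Longrightarrow> ell' d p \<in> F"
  unfolding fclosed_def dirs_def by (cases p) auto

lemma ptd_in: "fclosed F \<Longrightarrow> d \<in> dirs F \<Longrightarrow> a \<in> F \<Longrightarrow> b \<in> F \<Longrightarrow> ptd d a b \<in> F \<times> F"
  unfolding fclosed_def dirs_def by auto

lemma card_dirs: "finite F \<Longrightarrow> card (dirs F) = card F + 1"
  unfolding dirs_def by (simp add: card_image)

lemma finite_dirs: "finite F \<Longrightarrow> finite (dirs F)"
  unfolding dirs_def by simp

lemma set_ordl:
  assumes "fclosed F" "d \<in> dirs F" "set \<pi> = F"
  shows "set (ordl d \<pi> e) = F \<times> F"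
proof -
  interpret inj2 "ptd d" by (rule inj2_ptd)
  have "set (ordl d \<pi> e) = (\<lambda>(a,b). ptd d a b) ` (F \<times> F)"
    unfolding ordl_def set_blk using assms by auto
  also have "\<dots> = F \<times> F"
  proof
    show "(\<lambda>(a,b). ptd d a b) ` (F \<times> F) \<subseteq> F \<times> F"
    proof
      fix p assume "p \<in> (\<lambda>(a,b). ptd d a b) ` (F \<times> F)"
      then obtain a b where "a \<in> F" "b \<in> F" "p = ptd d a b" by auto
      then show "p \<in> F \<times> F" using ptd_in[OF assms(1,2)] by simp
    qed
    show "F \<times> F \<subseteq> (\<lambda>(a,b). ptd d a b) ` (F \<times> F)"
    proof
      fix p assume "p \<in> F \<times> F"
      then have "(ell d p, ell' d p) \<in> F \<times> F" using ell_in ell'_in assms by blast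
      then show "p \<in> (\<lambda>(a,b). ptd d a b) ` (F \<times> F)" using ptd_ell[of d p]
        by (metis (no_types, lifting) case_prod_conv image_eqI)
    qed
  qed
  finally show ?thesis .
qed

lemma distinct_ordl: "distinct \<pi> \<Longrightarrow> distinct (ordl d \<pi> e)"
proof -
  interpret inj2 "ptd d" by (rule inj2_ptd)
  show "distinct \<pi> \<Longrightarrow> distinct (ordl d \<pi> e)" unfolding ordl_def by (simp add: distinct_blk)
qed

lemma prec_ordl:
  assumes "distinct \<pi>" "a \<in> set \<pi>" "a' \<in> set \<pi>" "b \<in> set \<pi>" "b' \<in> set \<pi>"
  shows "subseq [ptd d a b, ptd d a' b'] (ordl d \<pi> e) \<longleftrightarrow>
    (a \<noteq> a' \<and> subseq [a,a'] \<pi>) \<or> (a = a' \<and> (if e then subseq [b',b] \<pi> else subseq [b,b'] \<pi>))"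
proof -
  interpret inj2 "ptd d" by (rule inj2_ptd)
  show ?thesis unfolding ordl_def using blk_prec[of \<pi> a a' b "if e then rev \<pi> else \<pi>" b'] assms
    by (auto simp: subseq_rev2)
qed


lemma size_filter_zero:
  assumes "\<And>x. x \<in># M \<Longrightarrow> \<not> P x"
  shows "size (filter_mset P M) = 0"
  using assms by (simp add: filter_mset_eq_conv)

lemma pair_sum:
  assumes XS: "psca_on F lam XS" and "finite F" "card F \<ge> 3"
    and uv: "u \<in> F" "v \<in> F" "u \<noteq> v" and st: "s \<in> F" "t \<in> F" "s \<noteq> t"
  shows "size (filter_mset (\<lambda>\<pi>. subseq [u,v] \<pi> \<and> subseq [s,t] \<pi>) XS)
       + size (filter_mset (\<lambda>\<pi>. subseq [u,v] \<pi> \<and> subseq [t,s] \<pi>) XS) = 3*lam"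
proof -
  have "size (filter_mset (\<lambda>\<pi>. subseq [u,v] \<pi> \<and> subseq [t,s] \<pi>) XS)
      = size (filter_mset (\<lambda>\<pi>. subseq [u,v] \<pi> \<and> \<not> subseq [s,t] \<pi>) XS)"
  proof (rule size_filter_cong)
    fix \<pi> assume "\<pi> \<in># XS"
    then have d: "distinct \<pi>" and se: "set \<pi> = F" using psca_onD1[OF XS] by auto
    have "subseq [s,t] \<pi> \<or> subseq [t,s] \<pi>" using prec_total[of s \<pi> t] st se by auto
    then show "subseq [u,v] \<pi> \<and> subseq [t,s] \<pi> \<longleftrightarrow> subseq [u,v] \<pi> \<and> \<not> subseq [s,t] \<pi>"
      using prec_asym[OF d] by blast
  qed
  then have "size (filter_mset (\<lambda>\<pi>. subseq [u,v] \<pi> \<and> subseq [s,t] \<pi>) XS)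
       + size (filter_mset (\<lambda>\<pi>. subseq [u,v] \<pi> \<and> subseq [t,s] \<pi>) XS)
       = size (filter_mset (\<lambda>\<pi>. subseq [u,v] \<pi>) XS)"
    using filter_mset_split2[of "\<lambda>\<pi>. subseq [u,v] \<pi>" XS "\<lambda>\<pi>. subseq [s,t] \<pi>"] by simp
  also have "\<dots> = 3 * lam" using psca_pair[OF XS] assms by blast
  finally show ?thesis .
qed

lemma count_dir:
  assumes XS: "psca_on F lam XS" and fin: "finite F" and c3: "card F \<ge> 3" and cl: "fclosed F"
    and d: "d \<in> dirs F"
    and xs: "x1 \<in> F\<times>F" "x2 \<in> F\<times>F" "x3 \<in> F\<times>F" "distinct [x1,x2,x3]"
  shows "size (filter_mset (\<lambda>\<pi>. subseq [x1,x2,x3] (ordl d \<pi> False)) XS)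
       + size (filter_mset (\<lambda>\<pi>. subseq [x1,x2,x3] (ordl d \<pi> True)) XS) =
    (if ell d x1 = ell d x2 \<and> ell d x1 = ell d x3 then 2*lam
     else if ell d x1 = ell d x2 then 3*lam
     else if ell d x2 = ell d x3 then 3*lam
     else if ell d x1 = ell d x3 then 0 else 2*lam)"
proof -
  define a1 where "a1 = ell d x1"
  define a2 where "a2 = ell d x2"
  define a3 where "a3 = ell d x3"
  define b1 where "b1 = ell' d x1"
  define b2 where "b2 = ell' d x2"
  define b3 where "b3 = ell' d x3"
  have x: "x1 = ptd d a1 b1" "x2 = ptd d a2 b2" "x3 = ptd d a3 b3"
    unfolding a1_def a2_def a3_def b1_def b2_def b3_def by (simp_all add: ptd_ell)
  have inF: "a1 \<in> F" "a2 \<in> F" "a3 \<in> F" "b1 \<in> F" "b2 \<in> F" "b3 \<in> F"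
    unfolding a1_def a2_def a3_def b1_def b2_def b3_def using ell_in ell'_in cl d xs by blast+
  have key: "subseq [x1,x2,x3] (ordl d \<pi> e) \<longleftrightarrow>
      ((a1 \<noteq> a2 \<and> subseq [a1,a2] \<pi>) \<or> (a1 = a2 \<and> (if e then subseq [b2,b1] \<pi> else subseq [b1,b2] \<pi>))) \<and>
      ((a2 \<noteq> a3 \<and> subseq [a2,a3] \<pi>) \<or> (a2 = a3 \<and> (if e then subseq [b3,b2] \<pi> else subseq [b2,b3] \<pi>)))"
    if "\<pi> \<in># XS" for \<pi> e
  proof -
    have dp: "distinct \<pi>" and sp: "set \<pi> = F" using psca_onD1[OF XS that] by auto
    show ?thesis
      unfolding subseq3_conv[OF distinct_ordl[OF dp]] x
      using prec_ordl[OF dp, of a1 a2 b1 b2 d e] prec_ordl[OF dp, of a2 a3 b2 b3 d e] inF sp by simp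
  qed
  have dx: "x1 \<noteq> x2" "x1 \<noteq> x3" "x2 \<noteq> x3" using xs(4) by auto
  note lam3 = psca_onD2[OF XS]
  have ea: "ell d x1 = a1" "ell d x2 = a2" "ell d x3 = a3" by (simp_all add: a1_def a2_def a3_def)
  show ?thesis
  proof (cases "a1 = a2 \<and> a1 = a3")
    case True
    then have bd: "b1 \<noteq> b2" "b1 \<noteq> b3" "b2 \<noteq> b3" using dx x by auto
    have "size (filter_mset (\<lambda>\<pi>. subseq [x1,x2,x3] (ordl d \<pi> False)) XS)
        = size (filter_mset (\<lambda>\<pi>. subseq [b1,b2,b3] \<pi>) XS)"
    proof (rule size_filter_cong)
      fix \<pi> assume p: "\<pi> \<in># XS"
      then have dp: "distinct \<pi>" using psca_onD1[OF XS] by auto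
      show "subseq [x1,x2,x3] (ordl d \<pi> False) \<longleftrightarrow> subseq [b1,b2,b3] \<pi>"
        using key[OF p, of False] True subseq3_conv[OF dp] by auto
    qed
    moreover have "size (filter_mset (\<lambda>\<pi>. subseq [x1,x2,x3] (ordl d \<pi> True)) XS)
        = size (filter_mset (\<lambda>\<pi>. subseq [b3,b2,b1] \<pi>) XS)"
    proof (rule size_filter_cong)
      fix \<pi> assume p: "\<pi> \<in># XS"
      then have dp: "distinct \<pi>" using psca_onD1[OF XS] by auto
      show "subseq [x1,x2,x3] (ordl d \<pi> True) \<longleftrightarrow> subseq [b3,b2,b1] \<pi>"
        using key[OF p, of True] True subseq3_conv[OF dp] by auto
    qed
    ultimately show ?thesis using True lam3 inF bd unfolding ea by auto
  next
    case F1: False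
    show ?thesis
    proof (cases "a1 = a2")
      case True
      then have a13: "a1 \<noteq> a3" using F1 by simp
      have bd: "b1 \<noteq> b2" using dx x True by auto
      have "size (filter_mset (\<lambda>\<pi>. subseq [x1,x2,x3] (ordl d \<pi> False)) XS)
          = size (filter_mset (\<lambda>\<pi>. subseq [a2,a3] \<pi> \<and> subseq [b1,b2] \<pi>) XS)"
        by (rule size_filter_cong) (use key True a13 in auto)
      moreover have "size (filter_mset (\<lambda>\<pi>. subseq [x1,x2,x3] (ordl d \<pi> True)) XS)
          = size (filter_mset (\<lambda>\<pi>. subseq [a2,a3] \<pi> \<and> subseq [b2,b1] \<pi>) XS)"
        by (rule size_filter_cong) (use key True a13 in auto)
      ultimately show ?thesis
        using pair_sum[OF XS fin c3, of a2 a3 b1 b2] True a13 bd inF F1 unfolding ea by auto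
    next
      case F2: False
      show ?thesis
      proof (cases "a2 = a3")
        case True
        have bd: "b2 \<noteq> b3" using dx x True by auto
        have "size (filter_mset (\<lambda>\<pi>. subseq [x1,x2,x3] (ordl d \<pi> False)) XS)
            = size (filter_mset (\<lambda>\<pi>. subseq [a1,a2] \<pi> \<and> subseq [b2,b3] \<pi>) XS)"
          by (rule size_filter_cong) (use key True F2 in auto)
        moreover have "size (filter_mset (\<lambda>\<pi>. subseq [x1,x2,x3] (ordl d \<pi> True)) XS)
            = size (filter_mset (\<lambda>\<pi>. subseq [a1,a2] \<pi> \<and> subseq [b3,b2] \<pi>) XS)"
          by (rule size_filter_cong) (use key True F2 in auto)
        ultimately show ?thesis
          using pair_sum[OF XS fin c3, of a1 a2 b2 b3] True F2 bd inF unfolding ea by auto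
      next
        case F3: False
        show ?thesis
        proof (cases "a1 = a3")
          case True
          have z: "size (filter_mset (\<lambda>\<pi>. subseq [x1,x2,x3] (ordl d \<pi> e)) XS) = 0" for e
          proof (rule size_filter_zero)
            fix \<pi> assume p: "\<pi> \<in># XS"
            then have dp: "distinct \<pi>" using psca_onD1[OF XS] by auto
            show "\<not> subseq [x1,x2,x3] (ordl d \<pi> e)"
              using key[OF p, of e] True F2 F3 prec_asym[OF dp, of a1 a2] by auto
          qed
          show ?thesis using z[of True] z[of False] True F2 F3 unfolding ea by simp
        next
          case F4: False
          have "size (filter_mset (\<lambda>\<pi>. subseq [x1,x2,x3] (ordl d \<pi> e)) XS)
            = size (filter_mset (\<lambda>\<pi>. subseq [a1,a2,a3] \<pi>) XS)" for e
          proof (rule size_filter_cong)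
            fix \<pi> assume p: "\<pi> \<in># XS"
            then have dp: "distinct \<pi>" using psca_onD1[OF XS] by auto
            show "subseq [x1,x2,x3] (ordl d \<pi> e) \<longleftrightarrow> subseq [a1,a2,a3] \<pi>"
              using key[OF p, of e] F2 F3 subseq3_conv[OF dp] by simp
          qed
          then show ?thesis using lam3 inF F2 F3 F4 unfolding ea by auto
        qed
      qed
    qed
  qed
qed


definition ordY :: "'a::field set \<Rightarrow> 'a list multiset \<Rightarrow> ('a \<times> 'a) list multiset" where
  "ordY F XS = (\<Sum>d\<in>dirs F. image_mset (\<lambda>\<pi>. ordl d \<pi> False) XS + image_mset (\<lambda>\<pi>. ordl d \<pi> True) XS)"

lemma filter_mset_sum_set: "filter_mset P (\<Sum>x\<in>A. f x) = (\<Sum>x\<in>A. filter_mset P (f x))"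
  by (induction A rule: infinite_finite_induct) auto

lemma sum_pattern:
  assumes fin: "finite D" and mem: "d12 \<in> D" "d13 \<in> D" "d23 \<in> D"
    and c1: "d12 = d13 \<Longrightarrow> d23 = d12"
    and c2: "d12 = d23 \<Longrightarrow> d13 = d12"
    and c3: "d13 = d23 \<Longrightarrow> d12 = d13"
  shows "(\<Sum>d\<in>D. (if d = d12 \<and> d = d13 then 2*L else if d = d12 then 3*L
          else if d = d23 then 3*L else if d = d13 then 0 else 2*L)) = 2 * L * card D"
    (is "(\<Sum>d\<in>D. ?f d) = _")
proof (cases "d12 = d13")
  case True
  then have "?f d = 2 * L" for d using c1 by auto
  then show ?thesis by simp
next
  case False
  have n1: "d23 \<noteq> d12" using c2 False by auto
  have n2: "d23 \<noteq> d13" using c3 False by auto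
  have "?f d + (if d = d13 then 2*L else 0) = 2*L + (if d = d12 then L else 0) + (if d = d23 then L else 0)" for d
    using False n1 n2 by auto
  then have "(\<Sum>d\<in>D. ?f d + (if d = d13 then 2*L else 0)) =
      (\<Sum>d\<in>D. 2*L + (if d = d12 then L else 0) + (if d = d23 then L else 0))" by simp
  then have "(\<Sum>d\<in>D. ?f d) + 2*L = 2*L*card D + L + L"
    using fin mem by (simp add: sum.distrib)
  then show ?thesis by simp
qed

theorem construction:
  assumes XS: "psca_on F lam XS" and fin: "finite F" and c3: "card F \<ge> 3" and cl: "fclosed F"
  shows "psca_on (F \<times> F) (2 * (card F + 1) * lam) (ordY F XS)"
  unfolding psca_on_def
proof (intro conjI ballI impI)
  fix \<pi>' assume "\<pi>' \<in># ordY F XS"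
  then obtain d where d: "d \<in> dirs F"
    and "\<pi>' \<in># image_mset (\<lambda>\<pi>. ordl d \<pi> False) XS + image_mset (\<lambda>\<pi>. ordl d \<pi> True) XS"
  proof -
    have "\<pi>' \<in> (\<Union>d\<in>dirs F. set_mset (image_mset (\<lambda>\<pi>. ordl d \<pi> False) XS + image_mset (\<lambda>\<pi>. ordl d \<pi> True) XS))"
      using \<open>\<pi>' \<in># ordY F XS\<close> unfolding ordY_def set_mset_sum[OF finite_dirs[OF fin]] .
    then show ?thesis using that by blast
  qed
  then obtain \<pi> e where p: "\<pi> \<in># XS" "\<pi>' = ordl d \<pi> e" by auto
  have "distinct \<pi>" "set \<pi> = F" using psca_onD1[OF XS p(1)] by auto
  then show "distinct \<pi>'" "set \<pi>' = F \<times> F" using p distinct_ordl set_ordl[OF cl d] by auto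
next
  fix x1 x2 x3 assume xs: "x1 \<in> F \<times> F" "x2 \<in> F \<times> F" "x3 \<in> F \<times> F" "distinct [x1,x2,x3]"
  have "size (filter_mset (\<lambda>\<pi>. subseq [x1,x2,x3] \<pi>) (ordY F XS)) =
     (\<Sum>d\<in>dirs F. size (filter_mset (\<lambda>\<pi>. subseq [x1,x2,x3] (ordl d \<pi> False)) XS)
       + size (filter_mset (\<lambda>\<pi>. subseq [x1,x2,x3] (ordl d \<pi> True)) XS))"
    unfolding ordY_def filter_mset_sum_set by (simp add: filter_mset_image_mset)
  also have "\<dots> = (\<Sum>d\<in>dirs F. (if ell d x1 = ell d x2 \<and> ell d x1 = ell d x3 then 2*lam
     else if ell d x1 = ell d x2 then 3*lam
     else if ell d x2 = ell d x3 then 3*lam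
     else if ell d x1 = ell d x3 then 0 else 2*lam))"
    by (rule sum.cong) (simp_all add: count_dir[OF XS fin c3 cl _ xs])
  also have "\<dots> = (\<Sum>d\<in>dirs F. (if d = dir x1 x2 \<and> d = dir x1 x3 then 2*lam
     else if d = dir x1 x2 then 3*lam
     else if d = dir x2 x3 then 3*lam
     else if d = dir x1 x3 then 0 else 2*lam))"
  proof -
    have "x1 \<noteq> x2" "x1 \<noteq> x3" "x2 \<noteq> x3" using xs(4) by auto
    then have eqs: "\<And>d. ell d x1 = ell d x2 \<longleftrightarrow> d = dir x1 x2"
      "\<And>d. ell d x1 = ell d x3 \<longleftrightarrow> d = dir x1 x3" "\<And>d. ell d x2 = ell d x3 \<longleftrightarrow> d = dir x2 x3"
      by (simp_all add: ell_eq_iff_dir)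
    show ?thesis by (simp only: eqs)
  qed
  also have "\<dots> = 2 * lam * card (dirs F)"
  proof (rule sum_pattern[OF finite_dirs[OF fin]])
    show "dir x1 x2 \<in> dirs F" "dir x1 x3 \<in> dirs F" "dir x2 x3 \<in> dirs F"
      using dir_in_dirs[OF cl] xs by auto
    have dd: "x1 \<noteq> x2" "x1 \<noteq> x3" "x2 \<noteq> x3" using xs(4) by auto
    show "dir x2 x3 = dir x1 x2" if "dir x1 x2 = dir x1 x3"
    proof -
      let ?d = "dir x1 x2"
      have "ell ?d x1 = ell ?d x2" "ell ?d x1 = ell ?d x3" using that dd by (simp_all add: ell_eq_iff_dir)
      then have "ell ?d x2 = ell ?d x3" by simp
      then show ?thesis using dd by (simp add: ell_eq_iff_dir)
    qed
    show "dir x1 x2 = dir x1 x3" if "dir x1 x3 = dir x2 x3"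
    proof -
      let ?d = "dir x1 x3"
      have "ell ?d x1 = ell ?d x3" "ell ?d x2 = ell ?d x3" using that dd by (simp_all add: ell_eq_iff_dir)
      then have "ell ?d x1 = ell ?d x2" by simp
      then show ?thesis using dd by (simp add: ell_eq_iff_dir)
    qed
    show "dir x1 x3 = dir x1 x2" if "dir x1 x2 = dir x2 x3"
    proof -
      let ?d = "dir x1 x2"
      have "ell ?d x1 = ell ?d x2" "ell ?d x2 = ell ?d x3" using that dd by (simp_all add: ell_eq_iff_dir)
      then have "ell ?d x1 = ell ?d x3" by simp
      then show ?thesis using dd by (simp add: ell_eq_iff_dir)
    qed
  qed
  also have "\<dots> = 2 * (card F + 1) * lam" using card_dirs[OF fin] by simp
  finally show "size (filter_mset (\<lambda>\<pi>. subseq [x1,x2,x3] \<pi>) (ordY F XS)) = 2 * (card F + 1) * lam" .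
qed


type_synonym K = "bit alg_closure"

lemma two_K: "(2::K) = 0"
  by (metis of_nat_numeral to_ac_numeral bit_numeral_even to_ac_0)

lemma of_nat_even_K: "even n \<Longrightarrow> (of_nat n :: K) = 0"
  using two_K by (metis dvdE mult_zero_left of_nat_mult of_nat_numeral)

lemma neg_K: "- (x::K) = x"
proof -
  have "x + x = 0" using two_K by (metis mult_2 mult_zero_left)
  then show ?thesis by (simp add: eq_neg_iff_add_eq_0)
qed

lemma frob2: "((x::K) + y) ^ 2 = x ^ 2 + y ^ 2"
proof -
  have "(x + y) ^ 2 = x^2 + 2 * x * y + y^2" by (simp add: power2_sum)
  then show ?thesis using two_K by simp
qed

lemma frob: "((x::K) + y) ^ (2 ^ j) = x ^ (2 ^ j) + y ^ (2 ^ j)"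
proof (induction j)
  case 0 then show ?case by simp
next
  case (Suc j)
  have "(x + y) ^ (2 ^ Suc j) = ((x + y) ^ (2 ^ j)) ^ 2" by (simp add: power_mult[symmetric] mult.commute)
  also have "\<dots> = (x ^ (2 ^ j)) ^ 2 + (y ^ (2^j)) ^ 2" using Suc frob2 by simp
  also have "\<dots> = x ^ (2 ^ Suc j) + y ^ (2 ^ Suc j)" by (simp add: power_mult[symmetric] mult.commute)
  finally show ?case .
qed

definition GF :: "nat \<Rightarrow> K set" where
  "GF j = {x. x ^ (2 ^ j) = x}"

lemma fclosed_GF: "fclosed (GF j)"
  unfolding fclosed_def GF_def
proof (intro ballI conjI; simp)
  fix x y :: K assume x: "x ^ 2 ^ j = x" and y: "y ^ 2 ^ j = y"
  show "(x + y) ^ 2 ^ j = x + y" using frob x y by simp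
  have e: "x - y = x + y" using neg_K[of y] by (metis diff_conv_add_uminus)
  show "(x - y) ^ 2 ^ j = x - y" unfolding e using frob x y by simp
  show "(x * y) ^ 2 ^ j = x * y" using x y by (simp add: power_mult_distrib)
  show "(x / y) ^ 2 ^ j = x / y" using x y by (simp add: power_divide)
qed

definition Pj :: "nat \<Rightarrow> K poly" where
  "Pj j = Polynomial.monom 1 (2 ^ j) - [:0, 1:]"

lemma poly_Pj: "poly (Pj j) x = x ^ (2 ^ j) - x"
  by (simp add: Pj_def poly_monom)

lemma degree_Pj:
  assumes "j \<ge> 1" shows "Polynomial.degree (Pj j) = 2 ^ j"
proof -
  have "(2::nat) ^ j \<ge> 2 ^ 1" using assms by (intro power_increasing) auto
  then have "Polynomial.degree (- [:0, 1::K:]) < Polynomial.degree (Polynomial.monom (1::K) (2 ^ j))"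
    by (simp add: degree_monom_eq)
  then have "Polynomial.degree (Polynomial.monom (1::K) (2 ^ j) + - [:0, 1:]) = Polynomial.degree (Polynomial.monom (1::K) (2 ^ j))"
    by (rule degree_add_eq_left)
  moreover have "Pj j = Polynomial.monom (1::K) (2 ^ j) + - [:0, 1:]" unfolding Pj_def by (rule diff_conv_add_uminus)
  ultimately show ?thesis by (simp only: degree_monom_eq one_neq_zero not_False_eq_True)
qed

lemma Pj_nz: "j \<ge> 1 \<Longrightarrow> Pj j \<noteq> 0"
  using degree_Pj by (metis degree_0 power_not_zero zero_neq_numeral)

lemma pderiv_Pj:
  assumes "j \<ge> 1" shows "pderiv (Pj j) = -1"
proof -
  have "even ((2::nat) ^ j)" using assms by simp
  then have "(of_nat (2 ^ j) :: K) = 0" by (rule of_nat_even_K)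
  then have "pderiv (Polynomial.monom (1::K) (2 ^ j)) = 0" by (simp add: pderiv_monom)
  moreover have "pderiv [:0, 1::K:] = 1" by (simp add: pderiv_pCons one_pCons)
  ultimately show ?thesis unfolding Pj_def by (simp add: pderiv_diff)
qed

lemma GF_roots: "GF j = {x. poly (Pj j) x = 0}"
  unfolding GF_def poly_Pj by simp

lemma card_GF:
  assumes j: "j \<ge> 1" shows "card (GF j) = 2 ^ j" "finite (GF j)"
proof -
  let ?P = "Pj j"
  have nz: "?P \<noteq> 0" using Pj_nz[OF j] .
  obtain A where A: "size A = Polynomial.degree ?P" "?P = Polynomial.smult (Polynomial.lead_coeff ?P) (\<Prod>x\<in>#A. [:-x,1:])"
    using alg_closed_imp_factorization[OF nz] by blast
  have lc: "Polynomial.lead_coeff ?P \<noteq> 0" using nz by simp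
  have roots: "{x. poly ?P x = 0} = set_mset A"
  proof -
    have "poly ?P x = 0 \<longleftrightarrow> x \<in># A" for x
    proof -
      have "poly ?P x = Polynomial.lead_coeff ?P * (\<Prod>a\<in>#A. x - a)"
        by (subst A(2)) (simp add: poly_prod_mset)
      then show ?thesis using lc by (force simp: prod_mset_zero_iff)
    qed
    then show ?thesis by auto
  qed
  have c1: "count A a \<le> 1" for a
  proof (rule ccontr)
    assume "\<not> count A a \<le> 1"
    then have "a \<in># A" by (metis count_eq_zero_iff le_simps(1) not_less_eq_eq zero_le)
    then obtain B where B: "A = add_mset a B" by (meson multi_member_split)
    then have "count B a \<ge> 1" using \<open>\<not> count A a \<le> 1\<close> by simp
    then have "a \<in># B" by (metis count_eq_zero_iff not_one_le_zero)
    then obtain C where C: "B = add_mset a C" by (meson multi_member_split)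
    have "(\<Prod>x\<in>#A. [:-x,1:]) = [:-a,1:] ^ 2 * (\<Prod>x\<in>#C. [:-x,1:])"
      unfolding B C by (simp only: image_mset_add_mset prod_mset.add_mset power2_eq_square mult.assoc)
    then have "[:-a,1:] ^ 2 dvd ?P" by (subst A(2)) (simp add: dvd_smult)
    then obtain Q where Q: "?P = [:-a,1:] ^ 2 * Q" by (rule dvdE)
    define r where "r = [:-a, 1::K:]"
    have r0: "poly r a = 0" unfolding r_def by simp
    have "poly (pderiv (r * r * Q)) a = 0"
      by (simp only: pderiv_mult poly_add poly_mult r0 mult_zero_left mult_zero_right add_0_left add_0_right)
    then have "poly (pderiv ?P) a = 0" using Q unfolding r_def by (simp only: power2_eq_square)
    then show False using pderiv_Pj[OF j] by simp
  qed
  have "A = mset_set (set_mset A)"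
  proof (rule multiset_eqI)
    fix a show "count A a = count (mset_set (set_mset A)) a"
    proof (cases "a \<in># A")
      case True
      have "0 < count A a" using True by simp
      moreover have "count (mset_set (set_mset A)) a = 1" using True by simp
      ultimately show ?thesis using c1[of a] by linarith
    next
      case False then show ?thesis by (simp add: not_in_iff)
    qed
  qed
  then have "size A = card (set_mset A)" by (metis size_mset_set)
  then show "card (GF j) = 2 ^ j" using roots A(1) degree_Pj[OF j] GF_roots by simp
  show "finite (GF j)" using GF_roots poly_roots_finite[OF nz] by simp
qed


definition X0 :: "nat list multiset" where
  "X0 = {#[1,2,3,4],[1,4,3,2],[2,4,1,3],[3,2,1,4],[3,4,1,2],[4,2,3,1]#}"

lemma base_psca: "psca_on {1..(2::nat)^2} 1 X0"
proof -
  have e: "{1..(2::nat)^2} = {1,2,3,4}" by auto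
  show ?thesis unfolding e psca_on_def X0_def by (simp add: insert_commute)
qed

lemma step:
  assumes XS: "psca_on {1..(2::nat)^j} lam XS" and j: "j \<ge> 2" and k: "k \<le> 2*j"
  shows "\<exists>Y. psca_on {1..(2::nat)^k} (2*(2^j+1)*lam) Y"
proof -
  have j1: "j \<ge> 1" using j by simp
  have cG: "card (GF j) = 2^j" and fG: "finite (GF j)" using card_GF[OF j1] by auto
  have "card {1..(2::nat)^j} = card (GF j)" using cG by simp
  then obtain f where f: "bij_betw f {1..(2::nat)^j} (GF j)"
    using fG finite_same_card_bij[of "{1..(2::nat)^j}" "GF j"] by auto
  have X': "psca_on (GF j) lam (image_mset (map f) XS)" by (rule psca_bij[OF XS f])
  have "(2::nat)^j \<ge> 2^2" using j by (intro power_increasing) auto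
  then have c3: "card (GF j) \<ge> 3" using cG by simp
  have Y: "psca_on (GF j \<times> GF j) (2 * (card (GF j) + 1) * lam) (ordY (GF j) (image_mset (map f) XS))"
    by (rule construction[OF X' fG c3 fclosed_GF])
  have fGG: "finite (GF j \<times> GF j)" using fG by simp
  have cT: "card {1..(2::nat)^k} \<le> card (GF j \<times> GF j)"
  proof -
    have "(2::nat)^k \<le> 2^(2*j)" using k by (intro power_increasing) auto
    also have "\<dots> = 2^j * 2^j" by (simp add: power_add mult_2)
    finally show ?thesis using cG by (simp add: card_cartesian_product)
  qed
  show ?thesis using psca_card[OF Y fGG finite_atLeastAtMost cT] cG by simp
qed

function LL :: "nat \<Rightarrow> nat" where
  "LL k = (if k \<le> 2 then 1 else 2 * (2 ^ ((k+1) div 2) + 1) * LL ((k+1) div 2))"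
  by auto
termination by (relation "Wellfounded.measure (\<lambda>k. k)") auto

declare LL.simps [simp del]

lemma LL_pos: "LL k > 0"
proof (induction k rule: less_induct)
  case (less k)
  show ?case
  proof (cases "k \<le> 2")
    case True then show ?thesis by (simp add: LL.simps)
  next
    case False
    then have "(k+1) div 2 < k" by simp
    then show ?thesis using less False by (simp add: LL.simps)
  qed
qed

lemma LL_psca: "k \<ge> 2 \<Longrightarrow> \<exists>XS. psca_on {1..(2::nat)^k} (LL k) XS"
proof (induction k rule: less_induct)
  case (less k)
  show ?case
  proof (cases "k \<le> 2")
    case True
    then have "k = 2" using less.prems by simp
    then show ?thesis using base_psca by (auto simp: LL.simps)
  next
    case False
    define j where "j = (k+1) div 2"
    have jk: "j < k" "j \<ge> 2" "k \<le> 2*j" using False unfolding j_def by auto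
    obtain XS where XS: "psca_on {1..(2::nat)^j} (LL j) XS" using less.IH[OF jk(1) jk(2)] by blast
    have "LL k = 2 * (2 ^ j + 1) * LL j" using False unfolding j_def by (simp add: LL.simps)
    then show ?thesis using step[OF XS jk(2) jk(3)] by simp
  qed
qed

lemma LL_bound: "2 \<le> k \<Longrightarrow> k \<le> 2^d \<Longrightarrow> LL k \<le> 2^k * 7^d"
proof (induction d arbitrary: k)
  case 0 then show ?case by simp
next
  case (Suc d)
  show ?case
  proof (cases "k \<le> 2")
    case True
    then have "LL k = 1" by (simp add: LL.simps)
    moreover have "1 \<le> (2::nat)^k * 7^Suc d" by simp
    ultimately show ?thesis by simp
  next
    case False
    define j where "j = (k+1) div 2"
    have jk: "j \<ge> 2" "j + j \<le> k + 1" "j \<le> k" using False unfolding j_def by auto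
    have "j \<le> 2^d" using Suc.prems(2) unfolding j_def by simp
    then have IH: "LL j \<le> 2^j * 7^d" using Suc.IH jk(1) by blast
    have LLk: "LL k = 2 * (2 ^ j + 1) * LL j" using False unfolding j_def by (simp add: LL.simps)
    have h1: "(2::nat)^j * 2^j \<le> 2 * 2^k"
    proof -
      have "(2::nat)^j * 2^j = 2^(j+j)" by (simp add: power_add)
      also have "\<dots> \<le> 2^(k+1)" using jk(2) by (intro power_increasing) auto
      finally show ?thesis by simp
    qed
    have h2: "(2::nat)^j \<le> 2^k" using jk(3) by (intro power_increasing) auto
    have "LL k \<le> 2 * (2 ^ j + 1) * (2^j * 7^d)" unfolding LLk using IH by (intro mult_left_mono) auto
    also have "\<dots> = (2 * (2^j * 2^j) + 2 * 2^j) * 7^d" by (simp add: algebra_simps)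
    also have "\<dots> \<le> (2 * (2 * 2^k) + 2 * 2^k) * 7^d" using h1 h2 by (intro mult_right_mono add_mono) auto
    also have "\<dots> \<le> 2^k * 7^Suc d" by simp
    finally show ?thesis .
  qed
qed


lemma two_pow_powr: "((2::real) ^ m) powr (log 2 7) = 7 ^ m"
proof -
  have "((2::real) ^ m) powr (log 2 7) = (2 powr (real m)) powr (log 2 7)"
    by (simp add: powr_realpow)
  also have "\<dots> = 2 powr (real m * log 2 7)" by (rule powr_powr)
  also have "\<dots> = 2 powr (log 2 7 * real m)" by (simp add: mult.commute)
  also have "\<dots> = (2 powr (log 2 7)) powr (real m)" by (rule powr_powr[symmetric])
  also have "\<dots> = 7 powr (real m)" by simp
  also have "\<dots> = 7 ^ m" by (simp add: powr_realpow)
  finally show ?thesis .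
qed

theorem lemma3p3:
  shows "\<exists>C::real. \<forall>n::nat. n \<ge> 3 \<longrightarrow>
           real (g n 3) \<le> C * real n * (log 2 (real n)) powr (log 2 7)"
proof (intro exI allI impI)
  fix n :: nat assume n: "n \<ge> 3"
  define e where "e = log 2 (7::real)"
  have e0: "e \<ge> 0" unfolding e_def by simp
  have "\<exists>k. n \<le> 2^k" using less_exp[of n] by (meson less_imp_le)
  define k where "k = (LEAST k. n \<le> 2^k)"
  have nk: "n \<le> 2^k" unfolding k_def using \<open>\<exists>k. n \<le> 2^k\<close> by (rule LeastI_ex)
  have k2: "k \<ge> 2"
  proof (rule ccontr)
    assume "\<not> k \<ge> 2"
    then have "(2::nat)^k \<le> 2^1" by (intro power_increasing) auto
    then show False using nk n by simp
  qed
  have kl: "2^(k-1) < n"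
  proof -
    have "k - 1 < k" using k2 by simp
    then have "\<not> n \<le> 2^(k-1)" unfolding k_def by (rule not_less_Least)
    then show ?thesis by simp
  qed
  have "\<exists>d. k \<le> 2^d" using less_exp[of k] by (meson less_imp_le)
  define d where "d = (LEAST d. k \<le> 2^d)"
  have kd: "k \<le> 2^d" unfolding d_def using \<open>\<exists>d. k \<le> 2^d\<close> by (rule LeastI_ex)
  have d1: "d \<ge> 1"
  proof (rule ccontr)
    assume "\<not> d \<ge> 1" then have "d = 0" by simp
    then show False using kd k2 by simp
  qed
  have dl: "2^(d-1) < k"
  proof -
    have "d - 1 < d" using d1 by simp
    then have "\<not> k \<le> 2^(d-1)" unfolding d_def by (rule not_less_Least)
    then show ?thesis by simp
  qed
  obtain XS where XS: "psca_on {1..(2::nat)^k} (LL k) XS" using LL_psca[OF k2] by blast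
  have "{1..n} \<subseteq> {1..(2::nat)^k}" using nk by auto
  from psca_restrict[OF XS this] have "psca_on {1..n} (LL k) (image_mset (filter (\<lambda>x. x \<in> {1..n})) XS)" .
  then have gle: "g n 3 \<le> LL k" using LL_pos by (rule g_le)
  have LLb: "LL k \<le> 2^k * 7^d" by (rule LL_bound[OF k2 kd])
  have rn: "real n \<ge> 3" using n by simp
  have A: "(2::real)^k \<le> 2 * real n"
  proof -
    have ks: "k = Suc (k-1)" using k2 by simp
    have "(2::real)^k = 2 * 2^(k-1)" by (subst ks) (simp only: power_Suc)
    also have "\<dots> \<le> 2 * real n" using kl by (simp add: of_nat_less_iff[symmetric])
    finally show ?thesis .
  qed
  have log1: "log 2 (real n) \<ge> 1" using rn by simp
  have kle: "real k \<le> 2 * log 2 (real n)"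
  proof -
    have "(2::real) powr (real (k-1)) < real n"
      using kl by (simp add: powr_realpow of_nat_less_iff[symmetric])
    then have "real (k-1) < log 2 (real n)" using rn by (simp add: less_log_iff)
    then have "real k < log 2 (real n) + 1" using k2 by simp
    then show ?thesis using log1 by simp
  qed
  have B: "(7::real)^d \<le> 49 * (log 2 (real n)) powr e"
  proof -
    have ds: "d = Suc (d-1)" using d1 by simp
    have "(7::real)^d = 7 * 7^(d-1)" by (subst ds) (simp only: power_Suc)
    also have "(7::real)^(d-1) = ((2::real)^(d-1)) powr e" unfolding e_def by (rule two_pow_powr[symmetric])
    also have "\<dots> \<le> (real k) powr e"
      using dl e0 by (intro powr_mono2) (auto simp: of_nat_less_iff[symmetric] less_imp_le)
    also have "\<dots> \<le> (2 * log 2 (real n)) powr e"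
      using kle e0 by (intro powr_mono2) auto
    also have "\<dots> = 2 powr e * (log 2 (real n)) powr e"
      using log1 by (subst powr_mult) auto
    also have "2 powr e = (7::real)" unfolding e_def by simp
    finally show ?thesis by simp
  qed
  have "real (g n 3) \<le> real (LL k)" using gle by simp
  also have "\<dots> \<le> real (2^k * 7^d)" using LLb by (simp only: of_nat_le_iff)
  also have "\<dots> = (2::real)^k * 7^d" by simp
  also have "\<dots> \<le> (2 * real n) * (49 * (log 2 (real n)) powr e)"
    using A B by (intro mult_mono) auto
  also have "\<dots> = 98 * real n * (log 2 (real n)) powr (log 2 7)" unfolding e_def by simp
  finally show "real (g n 3) \<le> 98 * real n * (log 2 (real n)) powr (log 2 7)" .
qed


end
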